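(* Suppose $F$ satisfies Assumption A1, $F\in MDA(\Lambda)$, Assumption A3, and $x_F=\infty$; let $u=\bar F/f$. For a threshold $a$ set $\beta=\bar F(a)$, $\eta=f(a)$, $\nu=-f'(a)$, and let $z^*(a,b)$ be the optimal value of $$\sup_g\int_b^\infty g(x)dx\ \text{ s.t. }\int_a^\infty g=\beta,\ g(a)=g(a+)=\eta,\ g'_+(a)\ge-\nu,\ g\text{ convex and }\ge0\text{ on }[a,\infty).$$ Fix $x\ge0$ and let $b=a+xu(a)$. Then $$\lim_{a\to\infty}\frac{z^*(a,b)}{\bar F(b)}=\begin{cases}\frac12e^x&\text{if }x\ge1,\\ \left(1-x+\frac12x^2\right)e^x&\text{if }x<1.\end{cases}$$
   Context: $X$ is a continuous random variable with distribution function $F$, density $f$, $\bar F=1-F$, right endpoint $x_F=\sup\{x:F(x)<1\}$. $\Lambda(x)=\exp\{-e^{-x}\}$. $F\in MDA(\Lambda)$ means there exist $c_n>0$, $d_n$ with $c_n^{-1}(M_n-d_n)$ converging in distribution to $\Lambda$, $M_n$ the maximum of $n$ i.i.d. copies of $X$. Assumption A1: there exists $z<x_F$ such that on $(z,x_F)$, $F$ is twice differentiable and $f$ is positive, decreasing and convex. Assumption A3: $\lim_{x\uparrow x_F}\bar F(x)f'(x)/f(x)^2=-1$. $g(a+)$ is the right limit and $g'_+$ the right derivative. *)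

theory Defs
  imports "HOL-Analysis.Analysis"
begin

definition Gumbel :: "real \<Rightarrow> real" where
  "Gumbel x = exp (- exp (- x))"

text \<open>Max-domain of attraction of the Gumbel law: there are normalising sequences
  c n > 0 and d n such that (M_n - d_n)/c_n converges in distribution to Gumbel.
  Since P(M_n \<le> y) = F(y)^n and Gumbel is continuous everywhere, this is pointwise
  convergence of F(c_n x + d_n)^n to Gumbel x for every real x.\<close>
definition MDA_Gumbel :: "(real \<Rightarrow> real) \<Rightarrow> bool" where
  "MDA_Gumbel F \<longleftrightarrow> (\<exists>c d :: nat \<Rightarrow> real. (\<forall>n. c n > 0) \<and>
      (\<forall>x. (\<lambda>n. F (c n * x + d n) ^ n) \<longlonglongrightarrow> Gumbel x))"

definition feasible :: "real \<Rightarrow> real \<Rightarrow> real \<Rightarrow> real \<Rightarrow> (real \<Rightarrow> real) set" where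
  "feasible a beta eta nu = {g.
      (g has_integral beta) {a..} \<and>
      g a = eta \<and> (g \<longlongrightarrow> eta) (at_right a) \<and>
      (\<exists>D. (g has_real_derivative D) (at_right a) \<and> D \<ge> - nu) \<and>
      convex_on {a..} g \<and> (\<forall>y\<ge>a. g y \<ge> 0)}"

definition zstar :: "(real \<Rightarrow> real) \<Rightarrow> (real \<Rightarrow> real) \<Rightarrow> (real \<Rightarrow> real) \<Rightarrow> real \<Rightarrow> real \<Rightarrow> ereal" where
  "zstar F f f' a b =
     (SUP g \<in> feasible a (1 - F a) (f a) (- f' a). ereal (integral {b..} g))"

end

theory Submission
  imports Defs
begin

lemma tri_int:
  fixes a eta nu s :: real
  assumes eta: "eta > 0" and nu: "nu > 0" and s: "s \<ge> 0"
  shows "((\<lambda>y. max 0 (eta - nu*(y-a))) has_integral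
          (eta * min s (eta/nu) - nu * (min s (eta/nu))^2/2)) {a..a+s}"
proof -
  define H where "H y = eta * min (y-a) (eta/nu) - nu * (min (y-a) (eta/nu))^2/2" for y
  have "((\<lambda>y. max 0 (eta - nu*(y-a))) has_integral (H (a+s) - H a)) {a..a+s}"
  proof (rule fundamental_theorem_of_calculus_interior_strong[where S="{a + eta/nu}"])
    show "continuous_on {a..a+s} H" unfolding H_def by (auto intro!: continuous_intros)
    fix y assume y: "y \<in> {a<..<a+s} - {a + eta/nu}"
    have "(H has_real_derivative max 0 (eta - nu*(y-a))) (at y)"
    proof (cases "y - a < eta/nu")
      case True
      have d: "((\<lambda>y. eta * (y-a) - nu * (y-a)^2/2) has_real_derivative (eta - nu*(y-a))) (at y)"
        by (auto intro!: derivative_eq_intros simp: field_simps)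
      have m: "max 0 (eta - nu*(y-a)) = eta - nu*(y-a)" using True nu by (simp add: field_simps)
      show ?thesis unfolding m
        apply (rule has_field_derivative_transform_within_open[OF d, where S="{..<a + eta/nu}"])
        using True by (auto simp: H_def)
    next
      case False
      then have F: "y - a > eta/nu" using y by auto
      have d: "((\<lambda>y. eta * (eta/nu) - nu * (eta/nu)^2/2) has_real_derivative 0) (at y)"
        by (auto intro!: derivative_eq_intros)
      have m: "max 0 (eta - nu*(y-a)) = 0" using F nu by (simp add: field_simps)
      show ?thesis unfolding m
        apply (rule has_field_derivative_transform_within_open[OF d, where S="{a + eta/nu<..}"])
        using F by (auto simp: H_def)
    qed
    then show "(H has_vector_derivative max 0 (eta - nu*(y-a))) (at y)"
      using has_real_derivative_iff_has_vector_derivative by blast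
  qed (use s in auto)
  moreover have "H a = 0" using eta nu by (simp add: H_def)
  moreover have "H (a+s) = eta * min s (eta/nu) - nu * (min s (eta/nu))^2/2" by (simp add: H_def)
  ultimately show ?thesis by simp
qed

lemma convex_tangent:
  fixes g :: "real \<Rightarrow> real"
  assumes cv: "convex_on {a..} g" and D: "(g has_real_derivative D) (at_right a)" and y: "y \<ge> a"
  shows "g y \<ge> g a + D*(y-a)"
proof (cases "y = a")
  case True then show ?thesis by simp
next
  case False
  then have ya: "y > a" using y by simp
  have lim: "((\<lambda>z. (g z - g a)/(z - a)) \<longlongrightarrow> D) (at_right a)"
    using D unfolding has_field_derivative_iff by simp
  have ev: "eventually (\<lambda>z. (g z - g a)/(z - a) \<le> (g y - g a)/(y - a)) (at_right a)"
  proof -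
    have "eventually (\<lambda>z. z < y) (at_right a)" unfolding eventually_at_right_field using ya by blast
    moreover have "eventually (\<lambda>z. z > a) (at_right a)" by (simp add: eventually_at_right_less)
    ultimately show ?thesis
    proof eventually_elim
      case (elim z)
      have "(g a - g z)/(a - z) \<le> (g a - g y)/(a - y)"
        using convex_on_slope_le(1)[OF cv, of a y z] elim ya by auto
      moreover have "(g a - g z)/(a - z) = (g z - g a)/(z - a)" by (simp add: divide_simps) (simp add: algebra_simps)
      moreover have "(g a - g y)/(a - y) = (g y - g a)/(y - a)" by (simp add: divide_simps) (simp add: algebra_simps)
      ultimately show ?case by simp
    qed
  qed
  have "D \<le> (g y - g a)/(y - a)"
    by (rule tendsto_upperbound[OF lim ev]) simp
  then have "D * (y - a) \<le> g y - g a" using ya by (simp add: field_simps)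
  then show ?thesis by simp
qed

lemma split_tail:
  fixes g :: "real \<Rightarrow> real"
  assumes g: "(g has_integral beta) {a..}" and ab: "a \<le> b"
  shows "(g has_integral (beta - integral {a..b} g)) {b..}"
proof -
  have gi: "g integrable_on {a..b}" using integrable_on_subinterval[of g "{a..}" a b] g ab by auto
  have 1: "((\<lambda>y. if y \<in> {a..} then g y else 0) has_integral beta) UNIV"
    using g has_integral_restrict_UNIV by blast
  have 2: "((\<lambda>y. if y \<in> {a..b} then g y else 0) has_integral integral {a..b} g) UNIV"
    using gi has_integral_restrict_UNIV integrable_integral by blast
  have 3: "((\<lambda>y. (if y \<in> {a..} then g y else 0) - (if y \<in> {a..b} then g y else 0)) has_integral (beta - integral {a..b} g)) UNIV"
    by (rule has_integral_diff[OF 1 2])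
  have "((\<lambda>y. if y \<in> {b..} then g y else 0) has_integral (beta - integral {a..b} g)) UNIV"
    by (rule has_integral_spike[OF negligible_sing[of b] _ 3]) (use ab in auto)
  then show ?thesis using has_integral_restrict_UNIV by blast
qed

definition Gf :: "real \<Rightarrow> real \<Rightarrow> real" where
  "Gf r x = min x (1/r) - r * (min x (1/r))^2/2"

lemma tri_val:
  fixes beta eta nu x :: real
  assumes b: "beta > 0" and e: "eta > 0" and n: "nu > 0"
  shows "eta * min (x*(beta/eta)) (eta/nu) - nu*(min (x*(beta/eta)) (eta/nu))^2/2
         = beta * Gf (beta*nu/eta^2) x"
proof -
  define u where "u = beta/eta"
  define r where "r = beta*nu/eta^2"
  have u: "u > 0" using b e by (simp add: u_def)
  have "eta/nu = u * (1/r)" using b e n by (simp add: u_def r_def field_simps power2_eq_square)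
  then have m: "min (x*u) (eta/nu) = u * min x (1/r)"
    using u by (simp add: min_mult_distrib_left mult.commute)
  have eu: "eta * u = beta" using e by (simp add: u_def)
  have nu2: "nu * u^2 = beta * r" using e by (simp add: u_def r_def power2_eq_square field_simps)
  have "eta * (u * min x (1/r)) - nu * (u * min x (1/r))^2/2
        = (eta*u) * min x (1/r) - (nu*u^2) * (min x (1/r))^2/2"
    by (simp add: power_mult_distrib algebra_simps)
  also have "\<dots> = beta * Gf r x" unfolding eu nu2 Gf_def by (simp add: algebra_simps)
  finally show ?thesis using m by (simp add: u_def r_def)
qed

lemma convex_max0:
  fixes p q :: real
  assumes that: "convex A"
  shows "convex_on A (\<lambda>y. max 0 (p - q*(y - a)))"
proof (rule convex_onI[OF _ that])
  fix t x y :: real assume t: "0 < t" "t < 1"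
  have eq: "p - q*((1-t)*\<^sub>Rx + t*\<^sub>Ry - a) = (1-t)*(p - q*(x-a)) + t*(p - q*(y-a))"
    by (simp add: algebra_simps)
  have 1: "(1-t)*(p - q*(x-a)) \<le> (1-t)* max 0 (p - q*(x-a))"
    using t by (intro mult_left_mono) auto
  have 2: "t*(p - q*(y-a)) \<le> t* max 0 (p - q*(y-a))"
    using t by (intro mult_left_mono) auto
  have 3: "0 \<le> (1-t)* max 0 (p - q*(x-a)) + t* max 0 (p - q*(y-a))"
    using t by (intro add_nonneg_nonneg mult_nonneg_nonneg) auto
  show "max 0 (p - q*((1-t)*\<^sub>Rx + t*\<^sub>Ry - a)) \<le> (1-t) * max 0 (p - q*(x-a)) + t * max 0 (p - q*(y-a))"
    unfolding eq using 1 2 3 by linarith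
qed

lemma zupper:
  fixes beta eta nu x a :: real
  assumes b: "beta > 0" and e: "eta > 0" and n: "nu > 0" and x: "x \<ge> 0"
  shows "(SUP g \<in> feasible a beta eta nu. ereal (integral {a + x*(beta/eta)..} g))
           \<le> ereal (beta * (1 - Gf (beta*nu/eta^2) x))"
proof (rule SUP_least)
  fix g assume "g \<in> feasible a beta eta nu"
  then obtain D where gi: "(g has_integral beta) {a..}" and ga: "g a = eta"
    and D: "(g has_real_derivative D) (at_right a)" "D \<ge> - nu"
    and cv: "convex_on {a..} g" and nn: "\<And>y. y \<ge> a \<Longrightarrow> g y \<ge> 0"
    unfolding feasible_def by auto
  define s where "s = x*(beta/eta)"
  have s: "s \<ge> 0" using x b e by (simp add: s_def)
  have T: "integral {a+s..} g = beta - integral {a..a+s} g"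
    using split_tail[OF gi, of "a+s"] s integral_unique by auto
  have tri: "((\<lambda>y. max 0 (eta - nu*(y-a))) has_integral beta * Gf (beta*nu/eta^2) x) {a..a+s}"
    using tri_int[OF e n s, of a] tri_val[OF b e n, of x] by (simp add: s_def)
  have "integral {a..a+s} (\<lambda>y. max 0 (eta - nu*(y-a))) \<le> integral {a..a+s} g"
  proof (rule integral_le)
    show "(\<lambda>y. max 0 (eta - nu*(y-a))) integrable_on {a..a+s}" using tri by blast
    show "g integrable_on {a..a+s}" using integrable_on_subinterval[of g "{a..}" a "a+s"] gi by auto
    fix y assume y: "y \<in> {a..a+s}"
    have "g y \<ge> g a + D*(y-a)" using convex_tangent[OF cv D(1)] y by auto
    moreover have "D*(y-a) \<ge> -nu*(y-a)" using D(2) y by (intro mult_right_mono) auto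
    ultimately have "g y \<ge> eta - nu*(y-a)" using ga by simp
    then show "max 0 (eta - nu*(y-a)) \<le> g y" using nn[of y] y by auto
  qed
  then have "integral {a..a+s} g \<ge> beta * Gf (beta*nu/eta^2) x" using integral_unique[OF tri] by simp
  then show "ereal (integral {a + x*(beta/eta)..} g) \<le> ereal (beta * (1 - Gf (beta*nu/eta^2) x))"
    using T by (simp add: s_def algebra_simps)
qed

lemma Gf_nonneg:
  assumes r: "r > 0" and x: "x \<ge> 0"
  shows "Gf r x \<ge> 0"
proof -
  define m where "m = min x (1/r)"
  have m0: "m \<ge> 0" using x r by (simp add: m_def)
  have rm: "r*m \<le> 1" using r by (simp add: m_def min_def field_simps)
  have "Gf r x = m * (1 - r*m/2)" by (simp add: Gf_def m_def power2_eq_square algebra_simps)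
  also have "\<dots> \<ge> 0" using m0 rm by (intro mult_nonneg_nonneg) auto
  finally show ?thesis .
qed

lemma zlower:
  fixes beta eta nu x a N :: real
  assumes b: "beta > 0" and e: "eta > 0" and n: "nu > 0" and x: "x \<ge> 0"
    and r: "beta*nu/eta^2 > 1/2" and N: "N \<ge> 1"
  shows "ereal (beta * (1 - Gf (beta*nu/eta^2) x - x/N))
           \<le> (SUP g \<in> feasible a beta eta nu. ereal (integral {a + x*(beta/eta)..} g))"
proof -
  define r where "r = beta*nu/eta^2"
  define u where "u = beta/eta"
  define c where "c = 1/N"
  define L where "L = (2*r*N - N + 1)/r"
  define nu2 where "nu2 = eta/(L*u)"
  define g where "g y = (1-c) * max 0 (eta - nu*(y-a)) + c * max 0 (eta - nu2*(y-a))" for y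
  have r0: "r > 0" using b e n by (simp add: r_def)
  have u0: "u > 0" using b e by (simp add: u_def)
  have c0: "0 < c" "c \<le> 1" using N by (auto simp: c_def)
  have rh: "r > 1/2" using r by (simp add: r_def)
  have rLe: "r*L = N*(2*r-1) + 1" using r0 by (simp add: L_def field_simps)
  have "N*(2*r-1) \<ge> 0" using rh N by (intro mult_nonneg_nonneg) auto
  then have rL: "r*L \<ge> 1" using rLe by simp
  have L0: "L > 0" using rL r0 by (metis less_numeral_extra(1) linorder_not_less mult_nonneg_nonpos order_le_less_trans less_le_not_le zero_less_mult_iff)
  have n20: "nu2 > 0" using e L0 u0 by (simp add: nu2_def)
  have enu: "eta/nu = u/r" using b e n by (simp add: u_def r_def field_simps power2_eq_square)
  have Lu: "L*u \<ge> eta/nu" unfolding enu using rL r0 u0 by (simp add: field_simps)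
  have en2: "eta/nu2 = L*u" using e L0 u0 by (simp add: nu2_def)
  have n2n: "nu2 \<le> nu"
  proof -
    have "eta/nu \<le> eta/nu2" using Lu en2 by simp
    then show ?thesis using e n n20 by (simp add: divide_le_cancel frac_le_eq field_simps)
  qed
  define B where "B = a + L*u"
  have aB: "a \<le> B" using L0 u0 by (simp add: B_def)
  have p1: "((\<lambda>y. max 0 (eta - nu*(y-a))) has_integral (eta^2/(2*nu))) {a..B}"
  proof -
    have mn: "min (L*u) (eta/nu) = eta/nu" using Lu by simp
    have vv: "eta*(eta/nu) - nu*(eta/nu)^2/2 = eta^2/(2*nu)" using n by (simp add: field_simps power2_eq_square)
    have "((\<lambda>y. max 0 (eta - nu*(y-a))) has_integral (eta*min (L*u) (eta/nu) - nu*(min (L*u) (eta/nu))^2/2)) {a..a+L*u}"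
      by (rule tri_int) (use e n L0 u0 in auto)
    then show ?thesis unfolding mn vv B_def .
  qed
  have p2: "((\<lambda>y. max 0 (eta - nu2*(y-a))) has_integral (eta*(L*u)/2)) {a..B}"
  proof -
    have mn: "min (L*u) (eta/nu2) = L*u" using en2 by simp
    have "nu2 * (L*u) = eta" using en2 n20 by (simp add: field_simps)
    then have vv: "eta*(L*u) - nu2*(L*u)^2/2 = eta*(L*u)/2" by (simp add: power2_eq_square algebra_simps)
    have "((\<lambda>y. max 0 (eta - nu2*(y-a))) has_integral (eta*min (L*u) (eta/nu2) - nu2*(min (L*u) (eta/nu2))^2/2)) {a..a+L*u}"
      by (rule tri_int) (use e n20 L0 u0 in auto)
    then show ?thesis unfolding mn vv B_def .
  qed
  have val: "(1-c)*(eta^2/(2*nu)) + c*(eta*(L*u)/2) = beta"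
  proof -
    have a1: "eta^2/(2*nu) = beta/(2*r)" using b e n by (simp add: r_def field_simps power2_eq_square)
    have a2: "eta*(L*u)/2 = L*beta/2" using e by (simp add: u_def)
    show ?thesis unfolding a1 a2 using r0 N by (simp add: c_def L_def field_simps)
  qed
  have gB: "(g has_integral beta) {a..B}"
    using has_integral_add[OF has_integral_mult_right[OF p1, of "1-c"] has_integral_mult_right[OF p2, of c]] val
    by (simp add: g_def[abs_def])
  have g0: "\<And>y. y \<ge> B \<Longrightarrow> g y = 0"
  proof -
    fix y assume y: "y \<ge> B"
    have "nu*(y-a) \<ge> nu*(eta/nu)" using y Lu n by (intro mult_left_mono) (auto simp: B_def)
    then have 1: "eta - nu*(y-a) \<le> 0" using n by simp
    have "nu2*(y-a) \<ge> nu2*(L*u)" using y n20 by (intro mult_left_mono) (auto simp: B_def)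
    then have 2: "eta - nu2*(y-a) \<le> 0" using en2 n20 by (simp add: field_simps)
    show "g y = 0" using 1 2 by (simp add: g_def)
  qed
  have gT: "(g has_integral 0) {B..}"
    by (rule has_integral_eq[of _ "\<lambda>_. 0"]) (use g0 in auto)
  have gI: "(g has_integral beta) {a..}"
  proof -
    have "(g has_integral (beta + 0)) ({a..B} \<union> {B..})"
      by (rule has_integral_Un[OF gB gT]) (rule negligible_subset[OF negligible_sing[of B]], auto)
    moreover have "{a..B} \<union> {B..} = {a..}" using aB by auto
    ultimately show ?thesis by simp
  qed
  have ga: "g a = eta" using e by (simp add: g_def algebra_simps)
  have gc: "(g \<longlongrightarrow> eta) (at_right a)"
  proof -
    have "isCont g a" unfolding g_def[abs_def] by (intro continuous_intros)
    then have "(g \<longlongrightarrow> g a) (at a)" by (simp add: isCont_def)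
    then show ?thesis using ga by (auto intro: tendsto_mono[OF at_le])
  qed
  define D where "D = -(1-c)*nu - c*nu2"
  have gD: "(g has_real_derivative D) (at_right a)"
  proof -
    have d: "((\<lambda>y. (1-c)*(eta - nu*(y-a)) + c*(eta - nu2*(y-a))) has_real_derivative D) (at a)"
      by (auto intro!: derivative_eq_intros simp: D_def algebra_simps)
    have "(g has_real_derivative D) (at a)"
    proof (rule has_field_derivative_transform_within_open[OF d, where S="{..< a + min (eta/nu) (eta/nu2)}"])
      show "a \<in> {..< a + min (eta/nu) (eta/nu2)}" using e n n20 by simp
      fix y assume "y \<in> {..< a + min (eta/nu) (eta/nu2)}"
      then have y1: "y - a < eta/nu" and y2: "y - a < eta/nu2" by auto
      have "nu*(y-a) < eta" using y1 n by (simp add: field_simps)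
      moreover have "nu2*(y-a) < eta" using y2 n20 by (simp add: field_simps)
      ultimately show "(1-c)*(eta - nu*(y-a)) + c*(eta - nu2*(y-a)) = g y" by (simp add: g_def)
    qed simp
    then show ?thesis by (rule has_field_derivative_at_within)
  qed
  have Dge: "D \<ge> -nu"
  proof -
    have "c*nu2 \<le> c*nu" using c0 n2n by (intro mult_left_mono) auto
    then show ?thesis by (simp add: D_def algebra_simps)
  qed
  have gcv: "convex_on {a..} g"
    unfolding g_def[abs_def] using c0
    by (intro convex_on_add convex_on_cmul convex_max0) (auto simp: convex_real_interval)
  have gnn: "\<forall>y\<ge>a. g y \<ge> 0" using c0 by (simp add: g_def)
  have feas: "g \<in> feasible a beta eta nu"
    unfolding feasible_def using gI ga gc gD Dge gcv gnn by auto
  define sx where "sx = x*u"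
  have sx: "sx \<ge> 0" using x u0 by (simp add: sx_def)
  have T: "integral {a+sx..} g = beta - integral {a..a+sx} g"
    using split_tail[OF gI, of "a+sx"] sx integral_unique by auto
  have q1: "((\<lambda>y. max 0 (eta - nu*(y-a))) has_integral beta * Gf r x) {a..a+sx}"
    using tri_int[OF e n sx, of a] tri_val[OF b e n, of x] by (simp add: sx_def u_def r_def)
  define m2 where "m2 = min sx (eta/nu2)"
  have q2: "((\<lambda>y. max 0 (eta - nu2*(y-a))) has_integral (eta*m2 - nu2*m2^2/2)) {a..a+sx}"
    using tri_int[OF e n20 sx, of a] by (simp add: m2_def)
  have Ias: "integral {a..a+sx} g = (1-c)*(beta * Gf r x) + c*(eta*m2 - nu2*m2^2/2)"
    using has_integral_add[OF has_integral_mult_right[OF q1, of "1-c"] has_integral_mult_right[OF q2, of c]]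
    by (simp add: g_def[abs_def] integral_unique)
  have m2b: "eta*m2 - nu2*m2^2/2 \<le> beta*x"
  proof -
    have "m2 \<le> sx" by (simp add: m2_def)
    then have "eta * m2 \<le> eta * sx" using e by simp
    moreover have "eta * sx = beta*x" using e by (simp add: sx_def u_def)
    moreover have "nu2*m2^2/2 \<ge> 0" using n20 by simp
    ultimately show ?thesis by linarith
  qed
  have Gn: "Gf r x \<ge> 0" using Gf_nonneg[OF r0 x] .
  have "(1-c)*(beta * Gf r x) \<le> beta * Gf r x"
    using c0 b Gn by (simp add: algebra_simps)
  moreover have "c*(eta*m2 - nu2*m2^2/2) \<le> c*(beta*x)" using c0 m2b by (intro mult_left_mono) auto
  ultimately have "integral {a..a+sx} g \<le> beta * Gf r x + c*(beta*x)" using Ias by linarith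
  then have "beta * (1 - Gf r x - x/N) \<le> integral {a+sx..} g"
    using T by (simp add: c_def algebra_simps)
  also have "ereal (integral {a+sx..} g) \<le> (SUP g \<in> feasible a beta eta nu. ereal (integral {a + x*(beta/eta)..} g))"
    using feas by (auto simp: sx_def u_def intro: SUP_upper)
  finally show ?thesis by (simp add: r_def)
qed

lemma denom:
  fixes F f f' :: "real \<Rightarrow> real" and x z :: real
  assumes der: "\<forall>t>z. (F has_real_derivative f t) (at t) \<and> (f has_real_derivative f' t) (at t) \<and> f t > 0"
    and A3: "((\<lambda>t. (1 - F t) * f' t / (f t)^2) \<longlongrightarrow> -1) at_top"
    and xF: "\<And>t. F t < 1" and x: "x \<ge> 0"
  shows "((\<lambda>a. (1 - F (a + x*((1-F a)/f a))) / (1 - F a)) \<longlongrightarrow> exp(-x)) at_top"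
proof -
  define U where "U t = (1 - F t)/f t" for t
  define U' where "U' t = -1 - (1-F t)*f' t/(f t)^2" for t
  define W where "W t = ln (1 - F t)" for t
  have dU: "(U has_real_derivative U' t) (at t)" if "t > z" for t
  proof -
    have h: "(F has_real_derivative f t) (at t)" "(f has_real_derivative f' t) (at t)" "f t > 0"
      using der that by auto
    have "((\<lambda>t. (1 - F t)/f t) has_real_derivative ((0 - f t) * f t - (1 - F t) * f' t)/(f t * f t)) (at t)"
      by (rule DERIV_divide[OF DERIV_diff[OF DERIV_const h(1)] h(2)]) (use h(3) in simp)
    moreover have "((0 - f t) * f t - (1 - F t) * f' t)/(f t * f t) = U' t"
      using h(3) by (simp add: U'_def field_simps power2_eq_square)
    ultimately show ?thesis by (simp add: U_def[abs_def])
  qed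
  have dW: "(W has_real_derivative (- f t/(1 - F t))) (at t)" if "t > z" for t
  proof -
    have h: "(F has_real_derivative f t) (at t)" using der that by auto
    have p: "1 - F t > 0" using xF[of t] by simp
    have "((\<lambda>t. ln (1 - F t)) has_real_derivative (1/(1 - F t)) * (0 - f t)) (at t)"
      by (rule DERIV_chain2[OF DERIV_ln_divide DERIV_diff[OF DERIV_const h]]) (use p in simp)
    then show ?thesis by (simp add: W_def[abs_def])
  qed
  have U'0: "(U' \<longlongrightarrow> 0) at_top"
  proof -
    have "((\<lambda>t. -1 - (1 - F t) * f' t / (f t)^2) \<longlongrightarrow> -1 - (-1)) at_top"
      by (intro tendsto_intros A3)
    then show ?thesis by (simp add: U'_def[abs_def])
  qed
  have Upos: "U t > 0" if "t > z" for t using der that xF[of t] by (simp add: U_def)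
  have key: "((\<lambda>a. W (a + x * U a) - W a) \<longlongrightarrow> -x) at_top"
  proof (cases "x = 0")
    case True then show ?thesis by simp
  next
    case False
    then have x0: "x > 0" using x by simp
    show ?thesis unfolding tendsto_iff
    proof (intro allI impI)
      fix e :: real assume e: "e > 0"
      define d where "d = min (1/(2*x)) (e/(4*x^2))"
      have d0: "d > 0" using x0 e by (simp add: d_def)
      have dx: "d*x \<le> 1/2" using x0 by (simp add: d_def min_def field_simps)
      have dx2: "2*d*x^2 \<le> e/2" using x0 by (simp add: d_def min_def field_simps)
      from U'0 d0 have "eventually (\<lambda>t. dist (U' t) 0 < d) at_top" unfolding tendsto_iff by blast
      then obtain A where A: "\<And>t. t \<ge> A \<Longrightarrow> \<bar>U' t\<bar> < d" unfolding eventually_at_top_linorder by auto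
      show "eventually (\<lambda>a. dist (W (a + x * U a) - W a) (-x) < e) at_top"
        unfolding eventually_at_top_linorder
      proof (intro exI[of _ "max A (z+1)"] allI impI)
        fix a assume a: "a \<ge> max A (z+1)"
        have Ua: "U a > 0" using Upos a by simp
        define b where "b = a + x * U a"
        have ab: "a < b" using x0 Ua by (simp add: b_def)
        have Ubnd: "\<bar>U t - U a\<bar> \<le> d * x * U a" if t: "a \<le> t" "t \<le> b" for t
        proof (cases "t = a")
          case True then show ?thesis using d0 x0 Ua by simp
        next
          case False
          then have at: "a < t" using t by simp
          obtain \<xi> where \<xi>: "a < \<xi>" "\<xi> < t" "U t - U a = (t - a) * U' \<xi>"
            using MVT2[OF at, of U U'] dU a by force
          have "\<bar>U' \<xi>\<bar> \<le> d" using A[of \<xi>] \<xi> a by simp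
          then have "\<bar>U t - U a\<bar> \<le> (t - a) * d" using \<xi> at by (simp add: abs_mult mult_left_mono)
          also have "\<dots> \<le> (x * U a) * d" using t d0 by (intro mult_right_mono) (auto simp: b_def)
          finally show ?thesis by (simp add: algebra_simps)
        qed
        obtain \<xi> where \<xi>: "a < \<xi>" "\<xi> < b" "W b - W a = (b - a) * (- f \<xi>/(1 - F \<xi>))"
          using MVT2[OF ab, of W "\<lambda>t. - f t/(1 - F t)"] dW a by force
        have Ux: "U \<xi> > 0" using Upos \<xi> a by simp
        have fx: "- f \<xi>/(1 - F \<xi>) = - 1 / U \<xi>" using xF[of \<xi>] Ux by (simp add: U_def)
        have Wd: "W b - W a + x = x * (U \<xi> - U a) / U \<xi>"
          using \<xi>(3) Ux unfolding fx by (simp add: b_def field_simps)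
        have ub: "\<bar>U \<xi> - U a\<bar> \<le> d * x * U a" using Ubnd \<xi> by simp
        have low: "U \<xi> \<ge> U a / 2"
        proof -
          have "d * x * U a \<le> U a / 2" using dx Ua by (simp add: mult_right_mono[OF dx, of "U a", simplified])
          then show ?thesis using ub by linarith
        qed
        have "\<bar>W b - W a + x\<bar> = x * \<bar>U \<xi> - U a\<bar> / U \<xi>" using Wd x0 Ux by (simp add: abs_mult)
        also have "\<dots> \<le> x * (d * x * U a) / (U a / 2)"
          using ub low Ux x0 Ua by (intro frac_le mult_left_mono) auto
        also have "\<dots> = 2 * d * x^2" using Ua by (simp add: field_simps power2_eq_square)
        also have "\<dots> < e" using dx2 e by linarith
        finally show "dist (W (a + x * U a) - W a) (-x) < e" by (simp add: dist_real_def b_def)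
      qed
    qed
  qed
  have "((\<lambda>a. exp (W (a + x * U a) - W a)) \<longlongrightarrow> exp (-x)) at_top"
    by (intro tendsto_intros key)
  moreover have "exp (W (a + x * U a) - W a) = (1 - F (a + x*((1-F a)/f a))) / (1 - F a)" for a
  proof -
    have "\<And>t. exp (W t) = 1 - F t" using xF by (simp add: W_def)
    then show ?thesis by (simp add: exp_diff U_def)
  qed
  ultimately show ?thesis by simp
qed

lemma ediv_le1:
  fixes Z :: ereal
  assumes q: "q > 0" and l: "ereal l \<le> Z"
  shows "ereal (l/q) \<le> Z / ereal q"
proof -
  have "ereal l / ereal q \<le> Z / ereal q" using l q by (intro ereal_divide_right_mono) auto
  then show ?thesis using q by simp
qed

lemma ediv_le2:
  fixes Z :: ereal
  assumes q: "q > 0" and l: "Z \<le> ereal h"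
  shows "Z / ereal q \<le> ereal (h/q)"
proof -
  have "Z / ereal q \<le> ereal h / ereal q" using l q by (intro ereal_divide_right_mono) auto
  then show ?thesis using q by simp
qed

theorem theorem6:
  fixes F f f' :: "real \<Rightarrow> real" and x :: real
  assumes F_mono: "mono F"
    and F_top: "(F \<longlongrightarrow> 1) at_top"
    and dens_nonneg: "\<And>t. f t \<ge> 0"
    and density: "\<And>t. (f has_integral F t) {..t}"
    and A1: "\<exists>z. (\<forall>t>z. (F has_real_derivative f t) (at t) \<and>
                         (f has_real_derivative f' t) (at t) \<and> f t > 0) \<and>
                (\<forall>s t. z < s \<and> s \<le> t \<longrightarrow> f t \<le> f s) \<and>
                convex_on {z<..} f"
    and MDA: "MDA_Gumbel F"
    and A3: "((\<lambda>t. (1 - F t) * f' t / (f t)^2) \<longlongrightarrow> -1) at_top"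
    and xF: "\<And>t. F t < 1"
    and x_nonneg: "x \<ge> 0"
  shows "((\<lambda>a. zstar F f f' a (a + x * ((1 - F a) / f a))
                / ereal (1 - F (a + x * ((1 - F a) / f a))))
          \<longlongrightarrow> ereal (if x \<ge> 1 then exp x / 2 else (1 - x + x^2 / 2) * exp x)) at_top"
proof -
  obtain z where z: "\<forall>t>z. (F has_real_derivative f t) (at t) \<and>
                         (f has_real_derivative f' t) (at t) \<and> f t > 0"
    using A1 by blast
  define r where "r a = (1 - F a) * (- f' a) / (f a)^2" for a
  define q where "q a = 1 - F (a + x * ((1 - F a) / f a))" for a
  define Z where "Z a = zstar F f f' a (a + x * ((1 - F a) / f a))" for a
  have rlim: "(r \<longlongrightarrow> 1) at_top"
  proof -
    have "((\<lambda>t. - ((1 - F t) * f' t / (f t)^2)) \<longlongrightarrow> - (-1)) at_top"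
      by (intro tendsto_intros A3)
    then show ?thesis by (simp add: r_def[abs_def])
  qed
  have qlim: "((\<lambda>a. q a / (1 - F a)) \<longlongrightarrow> exp (-x)) at_top"
    using denom[OF z A3 xF x_nonneg] by (simp add: q_def[abs_def])
  have Glim: "((\<lambda>a. Gf (r a) x) \<longlongrightarrow> Gf 1 x) at_top"
    unfolding Gf_def by (intro tendsto_intros rlim) simp_all
  have xa: "((\<lambda>a::real. x / a) \<longlongrightarrow> 0) at_top"
    by (intro tendsto_divide_0[OF tendsto_const] filterlim_at_top_imp_at_infinity filterlim_ident)
  define L where "L = (1 - Gf 1 x) / exp (-x)"
  have hilim: "((\<lambda>a. (1 - Gf (r a) x) / (q a / (1 - F a))) \<longlongrightarrow> L) at_top"
    unfolding L_def by (intro tendsto_intros Glim qlim) simp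
  have lolim: "((\<lambda>a. (1 - Gf (r a) x - x / a) / (q a / (1 - F a))) \<longlongrightarrow> L) at_top"
    using tendsto_divide[OF tendsto_diff[OF tendsto_diff[OF tendsto_const Glim] xa] qlim] unfolding L_def by simp
  have ev12: "eventually (\<lambda>a. r a > 1/2) at_top"
    using order_tendstoD(1)[OF rlim, of "1/2"] by simp
  have ev: "eventually (\<lambda>a. a > z \<and> a \<ge> 1 \<and> r a > 1/2) at_top"
    using eventually_gt_at_top[of z] eventually_ge_at_top[of 1] ev12
    by eventually_elim auto
  have bounds: "eventually (\<lambda>a. ereal ((1 - Gf (r a) x - x / a) / (q a / (1 - F a))) \<le> Z a / ereal (q a)
      \<and> Z a / ereal (q a) \<le> ereal ((1 - Gf (r a) x) / (q a / (1 - F a)))) at_top"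
    using ev
  proof eventually_elim
    case (elim a)
    have b: "1 - F a > 0" using xF[of a] by simp
    have e: "f a > 0" using z elim by auto
    have q0: "q a > 0" using xF by (simp add: q_def)
    have n: "- f' a > 0"
    proof -
      have "r a > 0" using elim by simp
      moreover have "(1 - F a) * (- f' a) = r a * (f a)^2" using e by (simp add: r_def)
      ultimately have "(1 - F a) * (- f' a) > 0" using e by simp
      then show ?thesis using b by (metis zero_less_mult_pos)
    qed
    have up: "Z a \<le> ereal ((1 - F a) * (1 - Gf (r a) x))"
      using zupper[OF b e n x_nonneg, of a] by (simp add: Z_def zstar_def r_def)
    have lo: "ereal ((1 - F a) * (1 - Gf (r a) x - x / a)) \<le> Z a"
      using zlower[OF b e n x_nonneg _ , of a a] elim by (simp add: Z_def zstar_def r_def)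
    have eq1: "(1 - F a) * (1 - Gf (r a) x) / q a = (1 - Gf (r a) x) / (q a / (1 - F a))"
      using b q0 by (simp add: field_simps)
    have eq2: "(1 - F a) * (1 - Gf (r a) x - x / a) / q a = (1 - Gf (r a) x - x / a) / (q a / (1 - F a))"
      using b q0 by (simp add: field_simps)
    show ?case using ediv_le1[OF q0 lo] ediv_le2[OF q0 up] unfolding eq1 eq2 by simp
  qed
  have "((\<lambda>a. Z a / ereal (q a)) \<longlongrightarrow> ereal L) at_top"
  proof (rule tendsto_sandwich[of "\<lambda>a. ereal ((1 - Gf (r a) x - x / a) / (q a / (1 - F a)))" _ _
        "\<lambda>a. ereal ((1 - Gf (r a) x) / (q a / (1 - F a)))"])
    show "eventually (\<lambda>a. ereal ((1 - Gf (r a) x - x / a) / (q a / (1 - F a))) \<le> Z a / ereal (q a)) at_top"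
      using bounds by (rule eventually_mono) simp
    show "eventually (\<lambda>a. Z a / ereal (q a) \<le> ereal ((1 - Gf (r a) x) / (q a / (1 - F a)))) at_top"
      using bounds by (rule eventually_mono) simp
  qed (use hilim lolim in \<open>auto intro: tendsto_ereal\<close>)
  moreover have "L = (if x \<ge> 1 then exp x / 2 else (1 - x + x^2 / 2) * exp x)"
    by (auto simp: L_def Gf_def exp_minus field_simps min_def power2_eq_square)
  ultimately show ?thesis by (simp add: Z_def[abs_def] q_def[abs_def])
qed
end
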